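(* Let $K$ be a field of characteristic $0$, let $L=\mathcal{L}(x,y)$ be the free Lie algebra over $K$ freely generated by $x,y$, let $\delta$ be the derivation of $L$ with $\delta(x)=0$, $\delta(y)=x$, and $L^\delta=\ker\delta$. Let $f\in L$ with $\deg_y(f)=2$. Then $f\in L^\delta$ if and only if $f$ belongs to the Lie subalgebra of $L$ generated by $x$ and $[y,x]$. *)

theory Defs
  imports Main "HOL-Library.Function_Algebras"
begin

text \<open>Free associative algebra K<x,y> on two generators, modelled as coefficient
functions on words (lists of generators); the free Lie algebra L(x,y) is modelled
as the Lie subalgebra of K<x,y> generated by x and y (Lie polynomials).\<close>

datatype gen = GX | GY

type_synonym 'k ncpoly = "gen list \<Rightarrow> 'k"

definition nc_gen :: "gen \<Rightarrow> 'k::field ncpoly" where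
  "nc_gen g = (\<lambda>w. if w = [g] then 1 else 0)"

definition xg :: "'k::field ncpoly" where "xg = nc_gen GX"
definition yg :: "'k::field ncpoly" where "yg = nc_gen GY"

definition nc_mult :: "'k::field ncpoly \<Rightarrow> 'k ncpoly \<Rightarrow> 'k ncpoly" where
  "nc_mult p q = (\<lambda>w. \<Sum>i\<in>{0..length w}. p (take i w) * q (drop i w))"

definition lie_bracket :: "'k::field ncpoly \<Rightarrow> 'k ncpoly \<Rightarrow> 'k ncpoly" where
  "lie_bracket p q = nc_mult p q - nc_mult q p"

inductive_set lie_span :: "'k::field ncpoly set \<Rightarrow> 'k ncpoly set" for S where
  gen: "s \<in> S \<Longrightarrow> s \<in> lie_span S"
| zero: "0 \<in> lie_span S"
| add: "p \<in> lie_span S \<Longrightarrow> q \<in> lie_span S \<Longrightarrow> p + q \<in> lie_span S"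
| smult: "p \<in> lie_span S \<Longrightarrow> (\<lambda>w. c * p w) \<in> lie_span S"
| bracket: "p \<in> lie_span S \<Longrightarrow> q \<in> lie_span S \<Longrightarrow> lie_bracket p q \<in> lie_span S"

definition free_lie :: "'k::field ncpoly set" where
  "free_lie = lie_span {xg, yg}"

text \<open>The derivation delta with delta(x) = 0, delta(y) = x (extended to K<x,y>):
  delta(word u) = sum over positions j with u!j = y of u[j := x].\<close>
definition delta :: "'k::field ncpoly \<Rightarrow> 'k ncpoly" where
  "delta p = (\<lambda>w. \<Sum>i\<in>{i. i < length w \<and> w ! i = GX}. p (w[i := GY]))"

definition deg_y :: "'k::field ncpoly \<Rightarrow> nat" where
  "deg_y p = (if p = 0 then 0 else Max ((\<lambda>w. count_list w GY) ` {w. p w \<noteq> 0}))"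

end

theory Submission
  imports Defs
begin


definition sm :: "'k::field \<Rightarrow> 'k ncpoly \<Rightarrow> 'k ncpoly" where
  "sm c p = (\<lambda>w. c * p w)"

lemma sm_apply[simp]: "sm c p w = c * p w" by (simp add: sm_def)

lemma nc_mult_Nil: "nc_mult p q [] = p [] * q []"
  by (simp add: nc_mult_def)

lemma nc_mult_Cons: "nc_mult p q (a # w) = p [] * q (a # w) + nc_mult (\<lambda>u. p (a # u)) q w"
proof -
  have "nc_mult p q (a # w) = (\<Sum>i\<in>{0..Suc (length w)}. p (take i (a#w)) * q (drop i (a#w)))"
    by (simp add: nc_mult_def)
  also have "\<dots> = p [] * q (a # w) + (\<Sum>i\<in>{0..length w}. p (a # take i w) * q (drop i w))"
    by (subst sum.atLeast0_atMost_Suc_shift) (simp add: o_def)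
  finally show ?thesis by (simp add: nc_mult_def)
qed

lemma nc_mult_add_left: "nc_mult (p + q) r = nc_mult p r + nc_mult q r"
  by (simp add: nc_mult_def fun_eq_iff distrib_right sum.distrib)
lemma nc_mult_add_right: "nc_mult r (p + q) = nc_mult r p + nc_mult r q"
  by (simp add: nc_mult_def fun_eq_iff distrib_left sum.distrib)
lemma nc_mult_diff_left: "nc_mult (p - q) r = nc_mult p r - nc_mult q r"
  by (simp add: nc_mult_def fun_eq_iff left_diff_distrib sum_subtractf)
lemma nc_mult_diff_right: "nc_mult r (p - q) = nc_mult r p - nc_mult r q"
  by (simp add: nc_mult_def fun_eq_iff right_diff_distrib sum_subtractf)
lemma nc_mult_sm_left: "nc_mult (sm c p) r = sm c (nc_mult p r)"
  by (simp add: nc_mult_def fun_eq_iff sum_distrib_left mult.assoc)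
lemma nc_mult_sm_right: "nc_mult r (sm c p) = sm c (nc_mult r p)"
  by (simp add: nc_mult_def fun_eq_iff sum_distrib_left algebra_simps)
lemma nc_mult_zero_left: "nc_mult 0 r = 0"
  by (simp add: nc_mult_def fun_eq_iff)
lemma nc_mult_zero_right: "nc_mult r 0 = 0"
  by (simp add: nc_mult_def fun_eq_iff)

lemma nc_mult_assoc_pt: "nc_mult (nc_mult p q) r w = nc_mult p (nc_mult q r) w"
proof (induction w arbitrary: p)
  case Nil
  then show ?case by (simp add: nc_mult_Nil)
next
  case (Cons a w)
  have e: "(\<lambda>u. nc_mult p q (a # u)) = sm (p []) (\<lambda>u. q (a # u)) + nc_mult (\<lambda>u. p (a # u)) q"
    by (simp add: fun_eq_iff nc_mult_Cons)
  have "nc_mult (nc_mult p q) r (a # w) = p [] * q [] * r (a # w)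
      + p [] * nc_mult (\<lambda>u. q (a # u)) r w + nc_mult (nc_mult (\<lambda>u. p (a # u)) q) r w"
    apply (simp only: nc_mult_Cons[of "nc_mult p q"] e nc_mult_add_left nc_mult_sm_left)
    by (simp add: nc_mult_Nil algebra_simps)
  also have "\<dots> = nc_mult p (nc_mult q r) (a # w)"
    using Cons.IH[of "\<lambda>u. p (a # u)"]
    by (simp add: nc_mult_Cons nc_mult_Nil algebra_simps)
  finally show ?case .
qed

lemma nc_mult_assoc: "nc_mult (nc_mult p q) r = nc_mult p (nc_mult q r)"
  using nc_mult_assoc_pt by blast



lemma lb_add_left: "lie_bracket (p + q) r = lie_bracket p r + lie_bracket q r"
  by (simp add: lie_bracket_def nc_mult_add_left nc_mult_add_right)
lemma lb_add_right: "lie_bracket r (p + q) = lie_bracket r p + lie_bracket r q"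
  by (simp add: lie_bracket_def nc_mult_add_left nc_mult_add_right)
lemma lb_sm_left: "lie_bracket (sm c p) r = sm c (lie_bracket p r)"
  by (simp add: lie_bracket_def nc_mult_sm_left nc_mult_sm_right fun_eq_iff algebra_simps)
lemma lb_sm_right: "lie_bracket r (sm c p) = sm c (lie_bracket r p)"
  by (simp add: lie_bracket_def nc_mult_sm_left nc_mult_sm_right fun_eq_iff algebra_simps)
lemma lb_zero_left: "lie_bracket 0 r = 0"
  by (simp add: lie_bracket_def nc_mult_zero_left nc_mult_zero_right)
lemma lb_zero_right: "lie_bracket r 0 = 0"
  by (simp add: lie_bracket_def nc_mult_zero_left nc_mult_zero_right)
lemma lb_self: "lie_bracket p p = 0"
  by (simp add: lie_bracket_def)
lemma lb_antisym: "lie_bracket q p = sm (-1) (lie_bracket p q)"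
  by (simp add: lie_bracket_def fun_eq_iff)
lemma lb_jacobi: "lie_bracket a (lie_bracket b c) = lie_bracket (lie_bracket a b) c + lie_bracket b (lie_bracket a c)"
  by (simp add: lie_bracket_def nc_mult_diff_left nc_mult_diff_right nc_mult_assoc algebra_simps)

definition Hex :: "nat \<Rightarrow> 'k::field ncpoly \<Rightarrow> bool" where
  "Hex k p = (\<forall>w. p w \<noteq> 0 \<longrightarrow> count_list w GY = k)"

definition Pk :: "nat \<Rightarrow> 'k::field ncpoly \<Rightarrow> 'k ncpoly" where
  "Pk k p = (\<lambda>w. if count_list w GY \<le> k then p w else 0)"

lemma Hex_zero: "Hex k 0" by (simp add: Hex_def)
lemma Hex_add: "Hex k p \<Longrightarrow> Hex k q \<Longrightarrow> Hex k (p + q)"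
  unfolding Hex_def by (metis add_0 plus_fun_apply)
lemma Hex_sm: "Hex k p \<Longrightarrow> Hex k (sm c p)"
  by (auto simp: Hex_def)
lemma Hex_diff: "Hex k p \<Longrightarrow> Hex k q \<Longrightarrow> Hex k (p - q)"
  unfolding Hex_def by (metis diff_self minus_apply)
lemma Hex_mult: "Hex j p \<Longrightarrow> Hex k q \<Longrightarrow> Hex (j + k) (nc_mult p q)"
  unfolding Hex_def nc_mult_def
proof (intro allI impI)
  fix w assume hp: "\<forall>w. p w \<noteq> 0 \<longrightarrow> count_list w GY = j" and hq: "\<forall>w. q w \<noteq> 0 \<longrightarrow> count_list w GY = k"
    and ne: "(\<Sum>i = 0..length w. p (take i w) * q (drop i w)) \<noteq> 0"
  then obtain i where "p (take i w) * q (drop i w) \<noteq> 0"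
    by (meson sum.not_neutral_contains_not_neutral)
  then have "count_list (take i w) GY = j" "count_list (drop i w) GY = k" using hp hq by auto
  then show "count_list w GY = j + k"
    by (metis append_take_drop_id count_list_append)
qed
lemma Hex_lb: "Hex j p \<Longrightarrow> Hex k q \<Longrightarrow> Hex (j + k) (lie_bracket p q)"
proof -
  assume a: "Hex j p" "Hex k q"
  have "Hex (j + k) (nc_mult p q)" using a by (rule Hex_mult)
  moreover have "Hex (k + j) (nc_mult q p)" using a by (intro Hex_mult)
  ultimately show ?thesis unfolding lie_bracket_def by (simp add: Hex_diff add.commute)
qed

lemma Hex_xg: "Hex 0 xg" by (simp add: Hex_def xg_def nc_gen_def)
lemma Hex_yg: "Hex 1 yg" by (simp add: Hex_def yg_def nc_gen_def)

lemma Pk_add: "Pk k (p + q) = Pk k p + Pk k q" by (simp add: Pk_def fun_eq_iff)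
lemma Pk_sm: "Pk k (sm c p) = sm c (Pk k p)" by (simp add: Pk_def fun_eq_iff)
lemma Pk_zero: "Pk k 0 = 0" by (simp add: Pk_def fun_eq_iff)
lemma Pk_Hex_le: "Hex j p \<Longrightarrow> j \<le> k \<Longrightarrow> Pk k p = p"
  by (auto simp: Pk_def Hex_def fun_eq_iff)
lemma Pk_Hex_gt: "Hex j p \<Longrightarrow> k < j \<Longrightarrow> Pk k p = 0"
  by (auto simp: Pk_def Hex_def fun_eq_iff)

lemma count_take_le: "count_list (take i w) a \<le> count_list w a"
  by (metis append_take_drop_id count_list_append le_add1)
lemma count_drop_le: "count_list (drop i w) a \<le> count_list w a"
  by (metis append_take_drop_id count_list_append le_add2)

lemma Pk_mult: "Pk k (nc_mult p q) = Pk k (nc_mult (Pk k p) (Pk k q))"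
  unfolding Pk_def nc_mult_def fun_eq_iff
proof (intro allI)
  fix w :: "gen list"
  show "(if count_list w GY \<le> k then \<Sum>i = 0..length w. p (take i w) * q (drop i w) else 0) =
    (if count_list w GY \<le> k then \<Sum>i = 0..length w.
      (if count_list (take i w) GY \<le> k then p (take i w) else 0) *
      (if count_list (drop i w) GY \<le> k then q (drop i w) else 0) else 0)"
  proof (cases "count_list w GY \<le> k")
    case True
    then have "\<And>i. count_list (take i w) GY \<le> k" "\<And>i. count_list (drop i w) GY \<le> k"
      using count_take_le count_drop_le order_trans by metis+
    then show ?thesis by simp
  qed simp
qed
lemma Pk_lb: "Pk k (lie_bracket p q) = Pk k (lie_bracket (Pk k p) (Pk k q))"
proof -
  have d: "Pk k (a - b) = Pk k a - Pk k b" for a b :: "'a ncpoly" by (simp add: Pk_def fun_eq_iff)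
  show ?thesis unfolding lie_bracket_def d using Pk_mult by metis
qed

lemma delta_alt: "delta p w = (\<Sum>i<length w. if w ! i = GX then p (w[i := GY]) else 0)"
proof -
  have e: "{i. i < length w \<and> w ! i = GX} = {i \<in> {..<length w}. w ! i = GX}" by auto
  have "delta p w = (\<Sum>i\<in>{i \<in> {..<length w}. w ! i = GX}. p (w[i := GY]))"
    unfolding delta_def e ..
  also have "\<dots> = (\<Sum>i<length w. if w ! i = GX then p (w[i := GY]) else 0)"
    by (rule sum.inter_filter) simp
  finally show ?thesis .
qed

lemma delta_add: "delta (p + q) = delta p + delta q"
  by (simp add: delta_def fun_eq_iff sum.distrib)
lemma delta_sm: "delta (sm c p) = sm c (delta p)"
  by (simp add: delta_def fun_eq_iff sum_distrib_left)
lemma delta_zero: "delta 0 = 0"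
  by (simp add: delta_def fun_eq_iff)
lemma delta_diff: "delta (p - q) = delta p - delta q"
  by (simp add: delta_def fun_eq_iff sum_subtractf)

lemma delta_mult: "delta (nc_mult p q) = nc_mult (delta p) q + nc_mult p (delta q)"
proof (rule ext)
  fix w :: "gen list"
  let ?n = "length w"
  define F where "F i j = (if w!i = GX then p (take j (w[i:=GY])) * q (drop j (w[i:=GY])) else 0)" for i j
  have "delta (nc_mult p q) w = (\<Sum>i<?n. \<Sum>j\<in>{0..?n}. F i j)"
    unfolding delta_alt nc_mult_def F_def
    by (rule sum.cong[OF refl]) simp
  also have "\<dots> = (\<Sum>j\<in>{0..?n}. \<Sum>i<?n. F i j)" by (rule sum.swap)
  also have "\<dots> = (\<Sum>j\<in>{0..?n}. delta p (take j w) * q (drop j w) + p (take j w) * delta q (drop j w))"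
  proof (rule sum.cong[OF refl])
    fix j assume j: "j \<in> {0..?n}"
    have spl: "{..<?n} = {..<j} \<union> {j..<?n}" using j by auto
    have a: "(\<Sum>i<?n. F i j) = (\<Sum>i<j. F i j) + (\<Sum>i\<in>{j..<?n}. F i j)"
      unfolding spl by (rule sum.union_disjoint) auto
    have 1: "(\<Sum>i<j. F i j) = delta p (take j w) * q (drop j w)"
      unfolding delta_alt sum_distrib_right
      using j by (intro sum.cong) (auto simp: F_def take_update_swap min_def split: if_split_asm)
    have "(\<Sum>i\<in>{j..<?n}. F i j) = (\<Sum>i\<in>{0+j..<(?n-j)+j}. F i j)" using j by simp
    also have "\<dots> = (\<Sum>k\<in>{0..<?n-j}. F (k+j) j)" by (rule sum.shift_bounds_nat_ivl)
    also have "\<dots> = p (take j w) * delta q (drop j w)"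
      unfolding delta_alt sum_distrib_left atLeast0LessThan
      using j by (intro sum.cong) (auto simp: F_def drop_update_swap add.commute)
    finally show "(\<Sum>i<?n. F i j) = delta p (take j w) * q (drop j w) + p (take j w) * delta q (drop j w)"
      using a 1 by simp
  qed
  also have "\<dots> = (nc_mult (delta p) q + nc_mult p (delta q)) w"
    by (simp add: nc_mult_def sum.distrib)
  finally show "delta (nc_mult p q) w = (nc_mult (delta p) q + nc_mult p (delta q)) w" .
qed

lemma delta_lb: "delta (lie_bracket p q) = lie_bracket (delta p) q + lie_bracket p (delta q)"
  by (simp add: lie_bracket_def delta_diff delta_mult algebra_simps)

lemma delta_xg: "delta (xg :: 'k::field ncpoly) = 0"
proof -
  have "(xg :: 'k ncpoly) (w[i := GY]) = 0" if "i < length w" for w :: "gen list" and i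
  proof -
    have "GY \<in> set (w[i := GY])" using that by (simp add: set_update_memI)
    then have "w[i := GY] \<noteq> [GX]" by auto
    then show ?thesis by (simp add: xg_def nc_gen_def)
  qed
  then show ?thesis unfolding delta_def fun_eq_iff zero_fun_apply by (auto intro!: sum.neutral)
qed

lemma delta_yg: "delta yg = xg"
proof (rule ext)
  fix w :: "gen list"
  show "delta yg w = xg w"
  proof (cases "w = [GX]")
    case True
    have "{i. i < length w \<and> w ! i = GX} = {0}" using True by auto
    then show ?thesis using True by (simp add: delta_def xg_def yg_def nc_gen_def)
  next
    case False
    have "yg (w[i := GY]) = 0" if "i < length w" "w ! i = GX" for i
    proof -
      have "w[i := GY] \<noteq> [GY]"
      proof
        assume h: "w[i := GY] = [GY]"
        have "length w = 1" using arg_cong[OF h, of length] by simp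
        then have "i = 0" using that by simp
        then show False using that False \<open>length w = 1\<close>
          by (cases w) auto
      qed
      then show ?thesis by (simp add: yg_def nc_gen_def)
    qed
    then have "delta yg w = 0" unfolding delta_def by (intro sum.neutral) blast
    then show ?thesis using False by (simp add: xg_def nc_gen_def)
  qed
qed



definition zg :: "'k::field ncpoly" where "zg = lie_bracket yg xg"

abbreviation TT :: "'k::field ncpoly set" where "TT \<equiv> lie_span {xg, zg}"

lemma sm_fold: "(\<lambda>w. c * p w) = sm c p" by (simp add: sm_def)
lemma Pk_lam0: "Pk k (\<lambda>w. 0) = 0" by (simp add: Pk_def fun_eq_iff)
lemma delta_lam0: "delta (\<lambda>w. 0) = (\<lambda>w. 0)" by (simp add: delta_def)
lemma sm_zero': "sm c 0 = 0" by (simp add: fun_eq_iff)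
lemma plus_fold: "(\<lambda>w. p w + q w) = p + q" by (simp add: fun_eq_iff)
lemma Hex_lb': "Hex j p \<Longrightarrow> Hex k q \<Longrightarrow> n = j + k \<Longrightarrow> Hex n (lie_bracket p q)"
  using Hex_lb by blast
lemma Hex_yv: "Hex 1 v \<Longrightarrow> Hex 2 (lie_bracket yg v)"
  by (rule Hex_lb'[OF Hex_yg]) simp_all

lemma T_x: "xg \<in> TT" by (rule lie_span.gen) simp
lemma T_z: "zg \<in> TT" by (rule lie_span.gen) simp
lemma T_add: "p \<in> TT \<Longrightarrow> q \<in> TT \<Longrightarrow> p + q \<in> TT" by (rule lie_span.add)
lemma T_sm: "p \<in> TT \<Longrightarrow> sm c p \<in> TT" unfolding sm_def by (rule lie_span.smult)
lemma T_lb: "p \<in> TT \<Longrightarrow> q \<in> TT \<Longrightarrow> lie_bracket p q \<in> TT" by (rule lie_span.bracket)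
lemma T_zero: "0 \<in> TT" by (rule lie_span.zero)

lemma Hex_zg: "Hex 1 zg"
  using Hex_lb[OF Hex_yg Hex_xg] by (simp add: zg_def)

lemma delta_zg: "delta zg = 0"
  by (simp add: zg_def delta_lb delta_xg delta_yg lb_self lb_zero_right)

lemma delta_T: "t \<in> TT \<Longrightarrow> delta t = 0"
proof (induction rule: lie_span.induct)
  case (gen s) then have "s = xg \<or> s = zg" by simp
  then show "delta s = 0" using delta_xg delta_zg by auto
next
  case zero show "delta 0 = 0" by (rule delta_zero)
next
  case (add p q)
  then have "delta p = 0" "delta q = 0" by (auto simp: fun_eq_iff)
  then show "delta (p + q) = 0" by (simp add: delta_add)
next
  case (smult p c)
  then have "delta p = 0" by (auto simp: fun_eq_iff)
  then show "delta (\<lambda>w. c * p w) = 0" by (simp only: sm_fold delta_sm sm_zero')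
next
  case (bracket p q)
  then have "delta p = 0" "delta q = 0" by (auto simp: fun_eq_iff)
  then show "delta (lie_bracket p q) = 0" by (simp only: delta_lb lb_zero_left lb_zero_right add_0)
qed

lemma lb_xy: "lie_bracket xg yg = sm (-1) zg"
  unfolding zg_def by (rule lb_antisym)

definition GG :: "'k::field ncpoly set" where
  "GG = {xg, yg} \<union> {lie_bracket yg v | v. v \<in> TT \<and> Hex 1 v} \<union> {v. v \<in> TT \<and> Hex 1 v} \<union> {u. u \<in> TT \<and> Hex 2 u}"

inductive_set S2 :: "'k::field ncpoly set" where
  gen: "g \<in> GG \<Longrightarrow> g \<in> S2"
| zero: "0 \<in> S2"
| add: "p \<in> S2 \<Longrightarrow> q \<in> S2 \<Longrightarrow> p + q \<in> S2"
| sm: "p \<in> S2 \<Longrightarrow> sm c p \<in> S2"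

lemma lam0: "(\<lambda>w. 0) = (0 :: 'k::field ncpoly)" by (simp add: fun_eq_iff)
lemma S2_zero': "0 \<in> S2" using S2.zero by (simp add: lam0)
lemma S2_lam0: "(\<lambda>w. 0) \<in> S2" using S2_zero' by (simp add: lam0)
lemma lb_lam0_right: "lie_bracket r (\<lambda>w. 0) = 0" by (simp add: lie_bracket_def nc_mult_def fun_eq_iff)
lemma lb_lam0_left: "lie_bracket (\<lambda>w. 0) r = 0" by (simp add: lie_bracket_def nc_mult_def fun_eq_iff)
lemma S2_T1: "v \<in> TT \<Longrightarrow> Hex 1 v \<Longrightarrow> v \<in> S2" by (rule S2.gen) (simp add: GG_def)
lemma S2_T2: "v \<in> TT \<Longrightarrow> Hex 2 v \<Longrightarrow> v \<in> S2" by (rule S2.gen) (simp add: GG_def)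
lemma S2_yv: "v \<in> TT \<Longrightarrow> Hex 1 v \<Longrightarrow> lie_bracket yg v \<in> S2" by (rule S2.gen) (auto simp: GG_def)

lemma Pk2_kill: "Hex i a \<Longrightarrow> Hex j b \<Longrightarrow> 2 < i + j \<Longrightarrow> Pk 2 (lie_bracket a b) = 0"
  by (rule Pk_Hex_gt[OF Hex_lb])
lemma Pk2_id: "Hex i a \<Longrightarrow> Hex j b \<Longrightarrow> i + j \<le> 2 \<Longrightarrow> Pk 2 (lie_bracket a b) = lie_bracket a b"
  by (rule Pk_Hex_le[OF Hex_lb])

lemma Pk2_swap: "Pk 2 (lie_bracket b a) = sm (-1) (Pk 2 (lie_bracket a b))"
  by (simp add: lb_antisym[of b a] Pk_sm)

lemma Gx: "b \<in> (GG :: 'k::field ncpoly set) \<Longrightarrow> Pk 2 (lie_bracket xg b) \<in> S2"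
proof -
  assume "b \<in> GG"
  then consider "b = xg" | "b = yg" | v where "b = lie_bracket yg v" "v \<in> TT" "Hex 1 v"
    | "b \<in> TT" "Hex 1 b" | "b \<in> TT" "Hex 2 b"
    unfolding GG_def by blast
  then show ?thesis
  proof cases
    case 1 then show ?thesis by (simp add: lb_self Pk_zero S2.zero)
  next
    case 2
    have "Pk 2 (lie_bracket xg yg) = (lie_bracket xg yg :: 'k ncpoly)" by (rule Pk2_id[OF Hex_xg Hex_yg]) simp
    then show ?thesis using 2 S2_T1[OF T_sm[OF T_z] Hex_sm[OF Hex_zg]] by (simp add: lb_xy)
  next
    case 3
    have h: "Hex 2 (lie_bracket yg v)" by (rule Hex_yv[OF 3(3)])
    have "Pk 2 (lie_bracket xg b) = lie_bracket xg b" unfolding 3 by (rule Pk2_id[OF Hex_xg h]) simp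
    also have "\<dots> = lie_bracket (lie_bracket xg yg) v + lie_bracket yg (lie_bracket xg v)"
      unfolding 3 by (rule lb_jacobi)
    also have "\<dots> \<in> S2"
    proof (rule S2.add)
      have hh: "Hex 2 (lie_bracket (sm (-1) zg) v)"
        by (rule Hex_lb'[OF Hex_sm[OF Hex_zg] 3(3)]) simp
      show "lie_bracket (lie_bracket xg yg) v \<in> S2"
        unfolding lb_xy by (intro S2_T2 T_lb T_sm T_z 3(2) hh)
      show "lie_bracket yg (lie_bracket xg v) \<in> S2"
        using Hex_lb[OF Hex_xg 3(3)] 3(2)
        by (auto intro!: S2_yv T_lb T_x)
    qed
    finally show ?thesis .
  next
    case 4
    then show ?thesis using Pk2_id[OF Hex_xg 4(2)] Hex_lb[OF Hex_xg 4(2)]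
      by (auto intro!: S2_T1 T_lb T_x)
  next
    case 5
    have hh: "Hex 2 (lie_bracket xg b)" by (rule Hex_lb'[OF Hex_xg 5(2)]) simp
    then show ?thesis using Pk2_id[OF Hex_xg 5(2)] 5
      by (auto intro!: S2_T2 T_lb T_x)
  qed
qed

lemma S2_neg: "p \<in> S2 \<Longrightarrow> sm (-1) p \<in> S2" by (rule S2.sm)

lemma G_cases:
  assumes "a \<in> GG"
  shows "a = xg \<or> (Hex 1 a \<and> (a = yg \<or> a \<in> TT)) \<or> Hex 2 a"
  using assms Hex_yg Hex_yv unfolding GG_def by auto

lemma G11:
  assumes "a = yg \<or> (a \<in> TT \<and> Hex 1 a)" "b = yg \<or> (b \<in> TT \<and> Hex 1 b)"
  shows "Pk 2 (lie_bracket a b) \<in> S2"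
proof -
  have ha: "Hex 1 a" and hb: "Hex 1 b" using assms Hex_yg by auto
  have e: "Pk 2 (lie_bracket a b) = lie_bracket a b" by (rule Pk2_id[OF ha hb]) simp
  have e2: "Pk 2 (lie_bracket b a) = lie_bracket b a" by (rule Pk2_id[OF hb ha]) simp
  have "lie_bracket a b \<in> S2"
  proof (cases "a = yg")
    case ay: True
    show ?thesis
    proof (cases "b = yg")
      case True then show ?thesis using ay by (simp add: lb_self S2.zero)
    next
      case False
      then have "b \<in> TT" using assms(2) by blast
      then show ?thesis unfolding ay by (rule S2_yv[OF _ hb])
    qed
  next
    case an: False
    then have aT: "a \<in> TT" using assms(1) by blast
    show ?thesis
    proof (cases "b = yg")
      case True
      have "lie_bracket b a \<in> S2" unfolding True by (rule S2_yv[OF aT ha])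
      then show ?thesis using lb_antisym[of a b] S2.sm by metis
    next
      case False
      then have bT: "b \<in> TT" using assms(2) by blast
      have "Hex 2 (lie_bracket a b)" by (rule Hex_lb'[OF ha hb]) simp
      then show ?thesis by (intro S2_T2 T_lb aT bT)
    qed
  qed
  then show ?thesis using e by simp
qed

lemma GG_pair: "a \<in> GG \<Longrightarrow> b \<in> GG \<Longrightarrow> Pk 2 (lie_bracket a b) \<in> S2"
proof -
  assume a: "a \<in> GG" and b: "b \<in> GG"
  show ?thesis
  proof (cases "a = xg")
    case True then show ?thesis using Gx[OF b] by simp
  next
    case na: False
    show ?thesis
    proof (cases "b = xg")
      case True then show ?thesis using Gx[OF a] Pk2_swap[of a xg] S2_neg by simp
    next
      case nb: False
      have ca: "(Hex 1 a \<and> (a = yg \<or> a \<in> TT)) \<or> Hex 2 a" using G_cases[OF a] na by simp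
      have cb: "(Hex 1 b \<and> (b = yg \<or> b \<in> TT)) \<or> Hex 2 b" using G_cases[OF b] nb by simp
      show ?thesis
      proof (cases "Hex 2 a \<or> Hex 2 b")
        case True
        then have "Pk 2 (lie_bracket a b) = 0"
          using ca cb Pk2_kill[of 2 a 1 b] Pk2_kill[of 1 a 2 b] Pk2_kill[of 2 a 2 b] by auto
        then show ?thesis by (simp add: S2.zero)
      next
        case False
        then show ?thesis using ca cb by (intro G11) auto
      qed
    qed
  qed
qed

lemma S2_closed_G: "q \<in> S2 \<Longrightarrow> a \<in> GG \<Longrightarrow> Pk 2 (lie_bracket a q) \<in> S2"
proof (induction q rule: S2.induct)
  case (gen g) then show ?case by (intro GG_pair)
next
  case zero show "Pk 2 (lie_bracket a 0) \<in> S2" by (simp add: lb_zero_right Pk_zero S2.zero)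
next
  case (add p q) then show "Pk 2 (lie_bracket a (p + q)) \<in> S2" by (simp add: lb_add_right Pk_add S2.add)
next
  case (sm p c) then show "Pk 2 (lie_bracket a (sm c p)) \<in> S2" by (simp add: lb_sm_right Pk_sm S2.sm)
qed

lemma S2_closed: "p \<in> S2 \<Longrightarrow> q \<in> S2 \<Longrightarrow> Pk 2 (lie_bracket p q) \<in> S2"
proof (induction p rule: S2.induct)
  case (gen g) then show ?case by (intro S2_closed_G)
next
  case zero show "Pk 2 (lie_bracket 0 q) \<in> S2" by (simp add: lb_zero_left Pk_zero S2.zero)
next
  case (add p q') then show "Pk 2 (lie_bracket (p + q') q) \<in> S2" by (simp add: lb_add_left Pk_add S2.add)
next
  case (sm p c) then show "Pk 2 (lie_bracket (sm c p) q) \<in> S2" by (simp add: lb_sm_left Pk_sm S2.sm)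
qed

lemma LemmaA: "p \<in> lie_span {xg, yg} \<Longrightarrow> Pk 2 p \<in> S2"
proof (induction rule: lie_span.induct)
  case (gen s)
  then show ?case
    using Pk_Hex_le[OF Hex_xg, of 2] Pk_Hex_le[OF Hex_yg, of 2]
    by (auto intro!: S2.gen simp: GG_def)
next
  case zero show "Pk 2 0 \<in> S2" by (simp add: Pk_zero S2.zero)
next
  case (add p q) then show "Pk 2 (p + q) \<in> S2" by (simp add: Pk_add S2.add)
next
  case (smult p c) then show "Pk 2 (\<lambda>w. c * p w) \<in> S2" by (simp only: sm_fold Pk_sm S2.sm)
next
  case (bracket p q)
  then show "Pk 2 (lie_bracket p q) \<in> S2" by (metis Pk_lb S2_closed)
qed

lemma S2_form: "g \<in> (S2 :: 'k::field ncpoly set) \<Longrightarrow> \<exists>a b v t. g = sm a xg + sm b yg + lie_bracket yg v + t \<and> v \<in> TT \<and> Hex 1 v \<and> t \<in> TT"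
proof (induction rule: S2.induct)
  case (gen g)
  then consider "g = xg" | "g = yg" | v where "g = lie_bracket yg v" "v \<in> TT" "Hex 1 v"
    | "g \<in> TT" "Hex 1 g" | "g \<in> TT" "Hex 2 g"
    unfolding GG_def by blast
  then show ?case
  proof cases
    case 1
    have "g = sm 1 xg + sm 0 yg + lie_bracket yg 0 + 0"
      using 1 by (simp add: lb_zero_right fun_eq_iff)
    then show ?thesis using T_zero Hex_zero by blast
  next
    case 2
    have "g = sm 0 xg + sm 1 yg + lie_bracket yg 0 + 0"
      using 2 by (simp add: lb_zero_right fun_eq_iff)
    then show ?thesis using T_zero Hex_zero by blast
  next
    case 3
    have "g = sm 0 xg + sm 0 yg + lie_bracket yg v + 0"
      using 3 by (simp add: fun_eq_iff)
    then show ?thesis using T_zero 3 by blast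
  next
    case 4
    have "g = sm 0 xg + sm 0 yg + lie_bracket yg 0 + g"
      by (simp add: lb_zero_right fun_eq_iff)
    then show ?thesis using T_zero Hex_zero 4 by blast
  next
    case 5
    have "g = sm 0 xg + sm 0 yg + lie_bracket yg 0 + g"
      by (simp add: lb_zero_right fun_eq_iff)
    then show ?thesis using T_zero Hex_zero 5 by blast
  qed
next
  case zero
  have "(0::'k ncpoly) = sm 0 xg + sm 0 yg + lie_bracket yg 0 + 0"
    by (simp add: lb_zero_right fun_eq_iff)
  then show "\<exists>a b v t. (0::'k ncpoly) = sm a xg + sm b yg + lie_bracket yg v + t \<and> v \<in> TT \<and> Hex 1 v \<and> t \<in> TT"
    using T_zero Hex_zero by blast
next
  case (add p q)
  then obtain a b v t a' b' v' t' where
    p: "p = sm a xg + sm b yg + lie_bracket yg v + t" "v \<in> TT" "Hex 1 v" "t \<in> TT" and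
    q: "q = sm a' xg + sm b' yg + lie_bracket yg v' + t'" "v' \<in> TT" "Hex 1 v'" "t' \<in> TT"
    by blast
  have "p + q = sm (a + a') xg + sm (b + b') yg + lie_bracket yg (v + v') + (t + t')"
    using p q by (simp add: lb_add_right fun_eq_iff algebra_simps)
  then show "\<exists>a b v t. p + q = sm a xg + sm b yg + lie_bracket yg v + t \<and> v \<in> TT \<and> Hex 1 v \<and> t \<in> TT"
    using p q T_add Hex_add by blast
next
  case (sm p c)
  then obtain a b v t where
    p: "p = sm a xg + sm b yg + lie_bracket yg v + t" "v \<in> TT" "Hex 1 v" "t \<in> TT"
    by blast
  have "sm c p = sm (c * a) xg + sm (c * b) yg + lie_bracket yg (sm c v) + sm c t"
    using p by (simp add: lb_sm_right fun_eq_iff algebra_simps)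
  then show "\<exists>a b v t. sm c p = sm a xg + sm b yg + lie_bracket yg v + t \<and> v \<in> TT \<and> Hex 1 v \<and> t \<in> TT"
    using p T_sm Hex_sm by blast
qed



lemma sm_zero: "sm c 0 = 0" by (simp add: fun_eq_iff)
lemma sm_zero_c: "sm 0 p = 0" by (simp add: fun_eq_iff)

lemma supp_mult: "{w. nc_mult p q w \<noteq> 0} \<subseteq> (\<lambda>(u,v). u @ v) ` ({u. p u \<noteq> 0} \<times> {v. q v \<noteq> 0})"
proof
  fix w assume "w \<in> {w. nc_mult p q w \<noteq> 0}"
  then have "(\<Sum>i = 0..length w. p (take i w) * q (drop i w)) \<noteq> 0" by (simp add: nc_mult_def)
  then obtain i where "p (take i w) * q (drop i w) \<noteq> 0"
    by (meson sum.not_neutral_contains_not_neutral)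
  then show "w \<in> (\<lambda>(u,v). u @ v) ` ({u. p u \<noteq> 0} \<times> {v. q v \<noteq> 0})"
    by (auto intro!: image_eqI[of _ _ "(take i w, drop i w)"])
qed

lemma fin_mult: "finite {w. p w \<noteq> 0} \<Longrightarrow> finite {w. q w \<noteq> 0} \<Longrightarrow> finite {w. nc_mult p q w \<noteq> 0}"
  by (rule finite_subset[OF supp_mult]) auto

lemma fin_L: "p \<in> lie_span {xg, yg} \<Longrightarrow> finite {w. (p :: 'k::field ncpoly) w \<noteq> 0}"
proof (induction rule: lie_span.induct)
  case (gen s)
  then have "{w. s w \<noteq> 0} \<subseteq> {[GX], [GY]}" by (auto simp: xg_def yg_def nc_gen_def split: if_splits)
  then show "finite {w. s w \<noteq> 0}" by (rule finite_subset) simp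
next
  case zero show "finite {w. (0::'k ncpoly) w \<noteq> 0}" by simp
next
  case (add p q)
  have sub: "{w. (p + q) w \<noteq> 0} \<subseteq> {w. p w \<noteq> 0} \<union> {w. q w \<noteq> 0}" by auto
  show "finite {w. (p + q) w \<noteq> 0}"
    by (rule finite_subset[OF sub]) (simp add: add.IH)
next
  case (smult p c)
  have sub: "{w. c * p w \<noteq> 0} \<subseteq> {w. p w \<noteq> 0}" by auto
  show "finite {w. c * p w \<noteq> 0}"
    by (rule finite_subset[OF sub]) (simp add: smult.IH)
next
  case (bracket p q)
  have sub: "{w. lie_bracket p q w \<noteq> 0} \<subseteq> {w. nc_mult p q w \<noteq> 0} \<union> {w. nc_mult q p w \<noteq> 0}"
    by (auto simp: lie_bracket_def)
  show "finite {w. lie_bracket p q w \<noteq> 0}"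
    by (rule finite_subset[OF sub]) (simp add: fin_mult bracket.IH)
qed

lemma xg_nz: "xg u \<noteq> 0 \<Longrightarrow> u = [GX]"
  by (simp add: xg_def nc_gen_def split: if_splits)

lemma xg_mult_Cons: "nc_mult xg v (a # w) = (if a = GX then v w else 0)"
proof -
  have "nc_mult xg v (a # w) = (\<Sum>i\<in>{0..length (a#w)}. if i = 1 then (if a = GX then v w else 0) else 0)"
    unfolding nc_mult_def
  proof (rule sum.cong[OF refl])
    fix i assume i: "i \<in> {0..length (a # w)}"
    show "xg (take i (a # w)) * v (drop i (a # w)) = (if i = 1 then (if a = GX then v w else 0) else 0)"
    proof (cases "i = 1")
      case True then show ?thesis by (simp add: xg_def nc_gen_def)
    next
      case False
      then have "take i (a # w) \<noteq> [GX]" using i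
        by (metis One_nat_def atLeastAtMost_iff length_Cons length_take list.size(3,4) min.absorb2 add_0)
      then show ?thesis using False xg_nz by force
    qed
  qed
  also have "\<dots> = (if a = GX then v w else 0)" by (subst sum.delta) auto
  finally show ?thesis .
qed

lemma mult_xg_snoc: "nc_mult v xg (w @ [a]) = (if a = GX then v w else 0)"
proof -
  have "nc_mult v xg (w @ [a]) = (\<Sum>i\<in>{0..length (w @ [a])}. if i = length w then (if a = GX then v w else 0) else 0)"
    unfolding nc_mult_def
  proof (rule sum.cong[OF refl])
    fix i assume i: "i \<in> {0..length (w @ [a])}"
    show "v (take i (w @ [a])) * xg (drop i (w @ [a])) = (if i = length w then (if a = GX then v w else 0) else 0)"
    proof (cases "i = length w")
      case True then show ?thesis by (simp add: xg_def nc_gen_def)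
    next
      case False
      have "length (drop i (w @ [a])) \<noteq> 1" using False i by auto
      have "drop i (w @ [a]) \<noteq> [GX]"
      proof
        assume h: "drop i (w @ [a]) = [GX]"
        have "length (drop i (w @ [a])) = length [GX]" using h by (rule arg_cong)
        then show False using \<open>length (drop i (w @ [a])) \<noteq> 1\<close> by simp
      qed
      then show ?thesis using False xg_nz by force
    qed
  qed
  also have "\<dots> = (if a = GX then v w else 0)" by (subst sum.delta) auto
  finally show ?thesis .
qed

lemma noGY: "GY \<notin> set xs \<Longrightarrow> xs = replicate (length xs) GX"
proof (induction xs)
  case (Cons x xs) then show ?case by (cases x) auto
qed simp

lemma count1_decomp: "count_list w GY = 1 \<Longrightarrow> \<exists>a c. w = replicate a GX @ GY # replicate c GX"
proof -
  assume h: "count_list w GY = 1"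
  then have "GY \<in> set w" using count_list_0_iff[of w GY] by auto
  then obtain ys zs where w: "w = ys @ GY # zs" "GY \<notin> set ys" by (meson split_list_first)
  then have "count_list ys GY = 0" by (simp add: count_list_0_iff)
  then have "count_list zs GY = 0" using h w by simp
  then have "GY \<notin> set zs" by (simp add: count_list_0_iff)
  then show ?thesis using w noGY by metis
qed

lemma centr:
  assumes hv: "Hex 1 v" and c0: "lie_bracket xg v = 0"
  shows "v = 0"
proof -
  have c: "nc_mult xg v u = nc_mult v xg u" for u
    using fun_cong[OF c0, of u] by (simp add: lie_bracket_def)
  have key: "\<forall>c. v (replicate a GX @ GY # replicate c GX) = 0" for a
  proof (induction a)
    case 0
    show ?case
    proof
      fix c
      have "nc_mult xg v (GY # (replicate c GX @ [GX])) = 0" by (simp add: xg_mult_Cons)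
      moreover have "nc_mult v xg ((GY # replicate c GX) @ [GX]) = v (GY # replicate c GX)"
        by (simp only: mult_xg_snoc) simp
      ultimately show "v (replicate 0 GX @ GY # replicate c GX) = 0" using c by simp
    qed
  next
    case (Suc a)
    show ?case
    proof
      fix c
      have e: "(replicate (Suc a) GX @ GY # replicate c GX) @ [GX] = GX # (replicate a GX @ GY # replicate (Suc c) GX)"
        by (simp add: replicate_append_same)
      have "nc_mult v xg ((replicate (Suc a) GX @ GY # replicate c GX) @ [GX]) = v (replicate (Suc a) GX @ GY # replicate c GX)"
        by (simp only: mult_xg_snoc) simp
      moreover have "nc_mult xg v (GX # (replicate a GX @ GY # replicate (Suc c) GX)) = 0"
        using spec[OF Suc.IH, of "Suc c"] by (simp only: xg_mult_Cons) simp
      ultimately show "v (replicate (Suc a) GX @ GY # replicate c GX) = 0" using c e by metis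
    qed
  qed
  show ?thesis
  proof (rule ext, rule ccontr)
    fix w assume "v w \<noteq> 0 w"
    then have "v w \<noteq> 0" by simp
    then have "count_list w GY = 1" using hv by (simp add: Hex_def)
    then obtain a c where "w = replicate a GX @ GY # replicate c GX" using count1_decomp by blast
    then show False using key \<open>v w \<noteq> 0\<close> by blast
  qed
qed

theorem corollary5p2:
  fixes f :: "'k::field_char_0 ncpoly"
  assumes "f \<in> free_lie" and "deg_y f = 2"
  shows "delta f = 0 \<longleftrightarrow> f \<in> lie_span {xg, lie_bracket yg xg}"
proof -
  have TE: "lie_span {xg, lie_bracket yg xg} = (TT :: 'k ncpoly set)" by (simp add: zg_def)
  have fL: "f \<in> lie_span {xg, yg}" using assms(1) by (simp add: free_lie_def)
  show ?thesis unfolding TE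
  proof
    assume d: "delta f = 0"
    have fin: "finite {w. f w \<noteq> 0}" by (rule fin_L[OF fL])
    have fnz: "f \<noteq> 0" using assms(2) by (auto simp: deg_y_def)
    then have mx: "Max ((\<lambda>w. count_list w GY) ` {w. f w \<noteq> 0}) = 2"
      using assms(2) by (simp add: deg_y_def)
    have le2: "count_list w GY \<le> 2" if "f w \<noteq> 0" for w
    proof -
      have "count_list w GY \<le> Max ((\<lambda>w. count_list w GY) ` {w. f w \<noteq> 0})"
        using fin that by (intro Max_ge) auto
      then show ?thesis using mx by simp
    qed
    have Pf: "Pk 2 f = f" using le2 by (auto simp: Pk_def fun_eq_iff)
    have "f \<in> S2" using LemmaA[OF fL] Pf by simp
    then obtain a b v t where fo: "f = sm a xg + sm b yg + lie_bracket yg v + t"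
      and vT: "v \<in> TT" and vH: "Hex 1 v" and tT: "t \<in> TT"
      using S2_form by blast
    have "delta f = sm b xg + lie_bracket xg v"
      unfolding fo
      by (simp add: delta_add delta_sm delta_xg delta_yg delta_lb delta_T[OF vT] delta_T[OF tT]
          lb_zero_right sm_zero)
    then have E: "sm b xg + lie_bracket xg v = 0" using d by simp
    have H1: "Hex 1 (lie_bracket xg v)" using Hex_lb[OF Hex_xg vH] by simp
    have "lie_bracket xg v [GX] = 0" using H1 by (auto simp: Hex_def)
    moreover have "(sm b xg + lie_bracket xg v) [GX] = 0" using E by simp
    ultimately have b0: "b = 0" by (simp add: xg_def nc_gen_def)
    have "lie_bracket xg v = 0" using E b0 by (simp add: sm_zero_c)
    then have v0: "v = 0" by (rule centr[OF vH])
    have "f = sm a xg + t" using fo b0 v0 by (simp add: sm_zero_c lb_zero_right)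
    then show "f \<in> TT" using T_add T_sm T_x tT by metis
  next
    assume "f \<in> TT"
    then show "delta f = 0" by (rule delta_T)
  qed
qed

end
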